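(* For all $i,j\in I$, in $\mathbb{C}((x))[[\hbar]]$, $$\kappa_{i,j}(-x)\kappa_{j,i}(x)^{-1}\cdot\frac{x-a_{i,j}\hbar}{x+a_{i,j}\hbar}=\tilde g_{j,i}(e^{-x})^{-1}=\tilde g_{i,j}(e^x),\qquad \kappa_{i,j}(x-2\hbar)=\kappa_{j,i}(-x).$$
   Context: $A=(a_{i,j})_{i,j\in I}$ is a Cartan matrix of type $A$, $D$ or $E$ (symmetric, $a_{i,i}=2$, off-diagonal entries in $\{0,-1\}$); $\mu$ is a permutation of $I$ with $a_{\mu(i),\mu(j)}=a_{i,j}$, $N$ its order, $\xi=e^{2\pi i/N}$. $q=e^\hbar$. For $n\in\mathbb Z$, $[n]_v=\frac{v^n-v^{-n}}{v-v^{-1}}$ (Laurent polynomial in $v$), and $[n]_{q^{\partial_x}}$ is this Laurent polynomial in the operator $q^{\partial_x}=e^{\hbar\partial_x}$, with $q^{m\partial_x}g(x)=g(x+m\hbar)$ expanded in nonnegative powers of $\hbar$. $\vartheta_0(x)=\log\frac{e^{x/2}-e^{-x/2}}{x}$ and $\vartheta_k(x)=\log\frac{\xi^ke^{x/2}-e^{-x/2}}{\xi^k-1}$ for $0\neq k\in\mathbb{Z}_N$, all in $x\mathbb{C}[[x]]$. $\kappa_{i,j}(x)=\exp\big(\sum_{k\in\mathbb{Z}_N}[a_{\mu^k(i),j}]_{q^{\partial_x}}q^{\partial_x}\vartheta_k(x)\big)\in\mathbb{C}[[x,\hbar]]$; $\kappa_{i,j}(x-2\hbar)$ means $e^{-2\hbar\partial_x}\kappa_{i,j}(x)$.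 $\tilde g_{i,j}(y)=\prod_{k\in\mathbb{Z}_N}\frac{q^{a_{\mu^k(i),j}}-\xi^{-k}y}{1-\xi^{-k}q^{a_{\mu^k(i),j}}y}$, and $\tilde g_{i,j}(e^{\pm x})$ denotes the element of $\mathbb{C}((x))[[\hbar]]$ obtained by substituting $y=e^{\pm x}$, $q=e^\hbar$ and expanding (the denominators are invertible in $\mathbb{C}((x))[[\hbar]]$); $\frac{x-a\hbar}{x+a\hbar}$ is expanded in nonnegative powers of $\hbar$. *)

theory Defs
  imports "HOL-Analysis.Analysis" "HOL-Computational_Algebra.Formal_Laurent_Series"
begin

text \<open>C[[x]] = complex fps (variable x).
  C[[x,h]] = complex fps fps : outer variable h (hbar), coefficients in C[[x]].
  C((x))[[h]] = complex fls fps : outer variable h, coefficients in C((x)).\<close>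

definition cartan_ADE :: "('i::finite \<Rightarrow> 'i \<Rightarrow> int) \<Rightarrow> bool" where
  "cartan_ADE A \<longleftrightarrow>
     (\<forall>a b. A a b = A b a) \<and> (\<forall>a. A a a = 2) \<and>
     (\<forall>a b. a \<noteq> b \<longrightarrow> A a b \<in> {0, -1}) \<and>
     \<comment> \<open>finite type: positive definite\<close>
     (\<forall>v::'i \<Rightarrow> real. (\<exists>a. v a \<noteq> 0) \<longrightarrow> (\<Sum>a\<in>UNIV. \<Sum>b\<in>UNIV. v a * of_int (A a b) * v b) > 0) \<and>
     \<comment> \<open>indecomposable (connected Dynkin diagram)\<close>
     (\<forall>S. S \<noteq> {} \<and> S \<noteq> UNIV \<longrightarrow> (\<exists>a\<in>S. \<exists>b. b \<notin> S \<and> A a b \<noteq> 0))"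

definition perm_order :: "('i \<Rightarrow> 'i) \<Rightarrow> nat" where
  "perm_order \<mu> = (LEAST n. 0 < n \<and> \<mu> ^^ n = id)"

definition xi :: "nat \<Rightarrow> complex" where
  "xi N = exp (2 * of_real pi * \<i> / of_nat N)"

text \<open>logarithm of a power series with constant term 1: log(1 + G) = ln(1+X) composed with G\<close>
definition fps_log1 :: "complex fps \<Rightarrow> complex fps" where
  "fps_log1 F = fps_ln 1 oo (F - 1)"

text \<open>theta_0 and theta_k, k in Z_N nonzero (represented by 0 < k < N)\<close>
definition theta :: "nat \<Rightarrow> nat \<Rightarrow> complex fps" where
  "theta N k = (if k = 0
     then fps_log1 ((fps_exp (1/2) - fps_exp (-1/2)) / fps_X)
     else fps_log1 (fps_const (1 / (xi N ^ k - 1)) *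
                    (fps_const (xi N ^ k) * fps_exp (1/2) - fps_exp (-1/2))))"

text \<open>q^{m d/dx} = e^{m h d/dx} acting on C[[x,h]]: g(x) \<mapsto> g(x + m h)\<close>
definition qshift :: "int \<Rightarrow> complex fps fps \<Rightarrow> complex fps fps" where
  "qshift m G = Abs_fps (\<lambda>n. \<Sum>l\<le>n. fps_const (of_int m ^ l / fact l) * fps_nth_deriv l (G $ (n - l)))"

text \<open>[n]_{q^{d/dx}}, with [n]_v = sum_{k<n} v^(n-1-2k) for n>=0 and [-n]_v = -[n]_v\<close>
definition qnum_op :: "int \<Rightarrow> complex fps fps \<Rightarrow> complex fps fps" where
  "qnum_op n G = (if 0 \<le> n then (\<Sum>k<nat n. qshift (n - 1 - 2 * int k) G)
                  else - (\<Sum>k<nat (-n). qshift (- n - 1 - 2 * int k) G))"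

text \<open>exp of an element of C[[x,h]] with zero constant term: sum_n F^n/n!,
  which is coefficientwise finite\<close>
definition bexp :: "complex fps fps \<Rightarrow> complex fps fps" where
  "bexp F = Abs_fps (\<lambda>j. Abs_fps (\<lambda>i. \<Sum>n\<le>i + j. (F ^ n) $ j $ i / fact n))"

definition negx :: "complex fps fps \<Rightarrow> complex fps fps" where
  "negx F = Abs_fps (\<lambda>j. Abs_fps (\<lambda>i. (-1) ^ i * F $ j $ i))"

definition to_Lh :: "complex fps fps \<Rightarrow> complex fls fps" where
  "to_Lh F = Abs_fps (\<lambda>j. fps_to_fls (F $ j))"

text \<open>e^{c x + d h} in C[[x,h]]\<close>
definition biexp :: "complex \<Rightarrow> complex \<Rightarrow> complex fps fps" where
  "biexp c d = Abs_fps (\<lambda>j. fps_const (d ^ j / fact j) * fps_exp c)"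

definition kappa :: "('i \<Rightarrow> 'i \<Rightarrow> int) \<Rightarrow> ('i \<Rightarrow> 'i) \<Rightarrow> 'i \<Rightarrow> 'i \<Rightarrow> complex fps fps" where
  "kappa A \<mu> i j = (let N = perm_order \<mu> in
     bexp (\<Sum>k<N. qnum_op (A ((\<mu> ^^ k) i) j) (qshift 1 (fps_const (theta N k)))))"

text \<open>g-tilde_{i,j}(e^{s x}) for s = 1 or s = -1, with q = e^h, in C((x))[[h]]\<close>
definition gtilde_exp :: "('i \<Rightarrow> 'i \<Rightarrow> int) \<Rightarrow> ('i \<Rightarrow> 'i) \<Rightarrow> 'i \<Rightarrow> 'i \<Rightarrow> complex \<Rightarrow> complex fls fps" where
  "gtilde_exp A \<mu> i j s = (let N = perm_order \<mu> in
     \<Prod>k<N. (let a = of_int (A ((\<mu> ^^ k) i) j); c = fps_const (fps_const (inverse (xi N) ^ k)) in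
        to_Lh (biexp 0 a - c * biexp s 0) * inverse (to_Lh (1 - c * biexp s a))))"

definition xfrac :: "int \<Rightarrow> complex fls fps" where
  "xfrac a = (fps_const fls_X - of_int a * fps_X) * inverse (fps_const fls_X + of_int a * fps_X)"

end

theory Submission
  imports Defs
begin

unbundle no vec_syntax

type_synonym bps = "complex fps fps"

definition tord :: "nat \<Rightarrow> bps \<Rightarrow> bool" where
  "tord d F \<longleftrightarrow> (\<forall>j i. i + j < d \<longrightarrow> F $ j $ i = 0)"

lemma bps_mult_nth: "((F::bps) * G) $ j $ i = (\<Sum>k=0..j. \<Sum>l=0..i. F $ k $ l * G $ (j - k) $ (i - l))"
  by (simp add: fps_mult_nth fps_sum_nth)

lemma tord_mult:
  assumes "tord a F" "tord b G" shows "tord (a + b) (F * G)"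
  unfolding tord_def
proof (intro allI impI)
  fix j i assume ij: "i + j < a + b"
  have "F $ k $ l * G $ (j - k) $ (i - l) = 0" if "k \<in> {0..j}" "l \<in> {0..i}" for k l
  proof (cases "l + k < a")
    case True then show ?thesis using assms(1) by (simp add: tord_def)
  next
    case False
    then have "(i - l) + (j - k) < b" using ij that by auto
    then show ?thesis using assms(2) by (simp add: tord_def)
  qed
  then show "(F * G) $ j $ i = 0" unfolding bps_mult_nth by (intro sum.neutral ballI) auto
qed

lemma tord_0 [simp]: "tord 0 F" by (simp add: tord_def)
lemma tord_zero [simp]: "tord d 0" by (simp add: tord_def)
lemma tord_mono: "tord d F \<Longrightarrow> e \<le> d \<Longrightarrow> tord e F" by (auto simp: tord_def)
lemma tord_add: "tord d F \<Longrightarrow> tord d G \<Longrightarrow> tord d (F + G)" by (simp add: tord_def)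
lemma tord_diff: "tord d F \<Longrightarrow> tord d G \<Longrightarrow> tord d (F - G)" by (simp add: tord_def)
lemma tord_uminus: "tord d F \<Longrightarrow> tord d (- F)" by (simp add: tord_def)
lemma tord_sum: "(\<And>x. x \<in> S \<Longrightarrow> tord d (f x)) \<Longrightarrow> tord d (sum f S)"
  by (induction S rule: infinite_finite_induct) (auto intro: tord_add)
lemma tord_mult_left: "tord d G \<Longrightarrow> tord d (F * G)"
  using tord_mult[of 0 F d G] by simp
lemma tord_mult_right: "tord d F \<Longrightarrow> tord d (F * G)"
  using tord_mult[of d F 0 G] by simp
lemma tord_power: "tord 1 F \<Longrightarrow> tord n (F ^ n)"
proof (induction n)
  case (Suc n) then show ?case using tord_mult[of 1 F n "F^n"] by simp
qed simp

definition texp :: "nat \<Rightarrow> bps \<Rightarrow> bps" where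
  "texp M F = (\<Sum>n\<le>M. fps_const (fps_const (1 / fact n)) * F ^ n)"

lemma bexp_texp:
  assumes F: "tord 1 F" and ij: "i + j \<le> M"
  shows "bexp F $ j $ i = texp M F $ j $ i"
proof -
  have "texp M F $ j $ i = (\<Sum>n\<le>M. (F ^ n) $ j $ i / fact n)"
    by (simp add: texp_def fps_sum_nth)
  also have "\<dots> = (\<Sum>n\<le>i + j. (F ^ n) $ j $ i / fact n)"
  proof (rule sum.mono_neutral_right)
    show "\<forall>n\<in>{..M} - {..i + j}. (F ^ n) $ j $ i / fact n = 0"
      using tord_power[OF F] by (auto simp: tord_def)
  qed (use ij in auto)
  finally show ?thesis by (simp add: bexp_def)
qed

lemma tord_bexp_texp:
  assumes F: "tord 1 F" shows "tord (Suc M) (bexp F - texp M F)"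
  using bexp_texp[OF F] by (simp add: tord_def)

lemma tord_eqI: "(\<And>M. tord (Suc M) (F - G)) \<Longrightarrow> F = (G::bps)"
proof (intro fps_ext)
  fix j i
  assume "\<And>M. tord (Suc M) (F - G)"
  from this[of "i + j"] show "F $ j $ i = G $ j $ i" by (auto simp: tord_def)
qed

abbreviation sc :: "complex \<Rightarrow> bps" where "sc c \<equiv> fps_const (fps_const c)"

definition ghom :: "(bps \<Rightarrow> bps) \<Rightarrow> bool" where
  "ghom \<phi> \<longleftrightarrow> (\<forall>F G. \<phi> (F + G) = \<phi> F + \<phi> G) \<and> (\<forall>F G. \<phi> (F * G) = \<phi> F * \<phi> G)
      \<and> (\<forall>c. \<phi> (sc c) = sc c) \<and> (\<forall>d F. tord d F \<longrightarrow> tord d (\<phi> F))"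

lemma ghom_add: "ghom \<phi> \<Longrightarrow> \<phi> (F + G) = \<phi> F + \<phi> G" by (simp add: ghom_def)
lemma ghom_mult: "ghom \<phi> \<Longrightarrow> \<phi> (F * G) = \<phi> F * \<phi> G" by (simp add: ghom_def)
lemma ghom_sc: "ghom \<phi> \<Longrightarrow> \<phi> (sc c) = sc c" by (simp add: ghom_def)
lemma ghom_tord: "ghom \<phi> \<Longrightarrow> tord d F \<Longrightarrow> tord d (\<phi> F)" by (simp add: ghom_def)
lemma ghom_one: "ghom \<phi> \<Longrightarrow> \<phi> 1 = 1" using ghom_sc[of \<phi> 1] by simp
lemma ghom_zero: "ghom \<phi> \<Longrightarrow> \<phi> 0 = 0" using ghom_sc[of \<phi> 0] by simp
lemma ghom_uminus: "ghom \<phi> \<Longrightarrow> \<phi> (- F) = - \<phi> F"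
  using ghom_add[of \<phi> F "-F"] ghom_zero[of \<phi>] by (simp add: eq_neg_iff_add_eq_0 add.commute)
lemma ghom_diff: "ghom \<phi> \<Longrightarrow> \<phi> (F - G) = \<phi> F - \<phi> G"
  using ghom_add[of \<phi> F "-G"] ghom_uminus[of \<phi> G] by simp
lemma ghom_sum: "ghom \<phi> \<Longrightarrow> \<phi> (sum f S) = (\<Sum>x\<in>S. \<phi> (f x))"
  by (induction S rule: infinite_finite_induct) (auto simp: ghom_zero ghom_add)
lemma ghom_prod: "ghom \<phi> \<Longrightarrow> \<phi> (prod f S) = (\<Prod>x\<in>S. \<phi> (f x))"
  by (induction S rule: infinite_finite_induct) (auto simp: ghom_one ghom_mult)
lemma ghom_power: "ghom \<phi> \<Longrightarrow> \<phi> (F ^ n) = (\<phi> F) ^ n"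
  by (induction n) (auto simp: ghom_one ghom_mult)
lemma ghom_texp: "ghom \<phi> \<Longrightarrow> \<phi> (texp M F) = texp M (\<phi> F)"
  by (simp add: texp_def ghom_sum ghom_mult ghom_sc ghom_power)

lemma ghom_bexp:
  assumes h: "ghom \<phi>" and F: "tord 1 F"
  shows "\<phi> (bexp F) = bexp (\<phi> F)"
proof (rule tord_eqI)
  fix M
  have F': "tord 1 (\<phi> F)" using ghom_tord[OF h F] .
  have "\<phi> (bexp F) - bexp (\<phi> F) = \<phi> (bexp F - texp M F) - (bexp (\<phi> F) - texp M (\<phi> F))"
    by (simp add: ghom_diff[OF h] ghom_texp[OF h])
  then show "tord (Suc M) (\<phi> (bexp F) - bexp (\<phi> F))"
    by (metis F F' ghom_tord[OF h] tord_bexp_texp tord_diff)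
qed

lemma tord_mult_eq:
  assumes "tord d (A - A')" "tord d (B - B')" shows "tord d (A * B - A' * B')"
proof -
  have "A * B - A' * B' = (A - A') * B + A' * (B - B')" by (simp add: algebra_simps)
  then show ?thesis using assms by (simp add: tord_add tord_mult_left tord_mult_right)
qed

lemma texp_mult:
  assumes F: "tord 1 F" and G: "tord 1 G"
  shows "tord (Suc M) (texp M F * texp M G - texp M (F + G))"
proof -
  define g where "g a b = sc (1 / fact a) * sc (1 / fact b) * F ^ a * G ^ b" for a b
  have "texp M (F + G) = (\<Sum>n\<le>M. \<Sum>a\<le>n. g a (n - a))"
  proof (unfold texp_def, rule sum.cong[OF refl])
    fix n assume "n \<in> {..M}"
    have "sc (1 / fact n) * (F + G) ^ n = (\<Sum>a\<le>n. sc (1 / fact n) * of_nat (n choose a) * F ^ a * G ^ (n - a))"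
      by (simp add: binomial_ring sum_distrib_left mult.assoc)
    also have "\<dots> = (\<Sum>a\<le>n. g a (n - a))"
    proof (rule sum.cong[OF refl])
      fix a assume a: "a \<in> {..n}"
      have "(1 / fact n) * of_nat (n choose a) = (1 / fact a) * (1 / fact (n - a) :: complex)"
        using a by (simp add: binomial_fact field_simps)
      then have "sc (1 / fact n) * of_nat (n choose a) = sc (1 / fact a) * sc (1 / fact (n - a))"
        by (metis fps_const_mult fps_of_nat of_nat_fact)
      then show "sc (1 / fact n) * of_nat (n choose a) * F ^ a * G ^ (n - a) = g a (n - a)"
        by (simp add: g_def)
    qed
    finally show "sc (1 / fact n) * (F + G) ^ n = (\<Sum>a\<le>n. g a (n - a))" .
  qed
  also have "\<dots> = (\<Sum>(a, b)\<in>{(a, b). a + b \<le> M}. g a b)"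
    by (rule sum.triangle_reindex_eq[symmetric])
  finally have e1: "texp M (F + G) = (\<Sum>(a, b)\<in>{(a, b). a + b \<le> M}. g a b)" .
  have e2: "texp M F * texp M G = (\<Sum>(a, b)\<in>{..M} \<times> {..M}. g a b)"
    by (simp add: texp_def sum_product sum.cartesian_product g_def algebra_simps)
  have sub: "{(a, b). a + b \<le> M} \<subseteq> {..M} \<times> {..M}" by auto
  have "texp M F * texp M G - texp M (F + G) = (\<Sum>(a, b)\<in>{..M} \<times> {..M} - {(a, b). a + b \<le> M}. g a b)"
    unfolding e1 e2 by (subst sum.subset_diff[OF sub]) auto
  also have "tord (Suc M) \<dots>"
  proof (rule tord_sum)
    fix x assume x: "x \<in> {..M} \<times> {..M} - {(a, b). a + b \<le> M}"
    obtain a b where ab: "x = (a, b)" by force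
    have "tord (a + b) (F ^ a * G ^ b)" using tord_mult[OF tord_power[OF F] tord_power[OF G]] .
    then have "tord (a + b) (g a b)" by (simp add: g_def mult.assoc tord_mult_left)
    then show "tord (Suc M) (case x of (a, b) \<Rightarrow> g a b)"
      using x ab by (auto intro: tord_mono)
  qed
  finally show ?thesis .
qed

lemma bexp_add:
  assumes F: "tord 1 F" and G: "tord 1 G"
  shows "bexp (F + G) = bexp F * bexp G"
proof (rule tord_eqI)
  fix M
  have FG: "tord 1 (F + G)" using F G by (rule tord_add)
  have "bexp (F + G) - bexp F * bexp G =
      (bexp (F + G) - texp M (F + G)) - (texp M F * texp M G - texp M (F + G))
      - (bexp F * bexp G - texp M F * texp M G)"
    by (simp add: algebra_simps)
  then show "tord (Suc M) (bexp (F + G) - bexp F * bexp G)"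
    by (metis F G FG tord_bexp_texp texp_mult tord_mult_eq tord_diff)
qed

lemma bexp_zero [simp]: "bexp 0 = 1"
proof (rule fps_ext, rule fps_ext)
  fix n i
  have "(\<Sum>nb\<le>i + n. (0::bps) ^ nb $ n $ i / fact nb) = (\<Sum>nb\<le>i + n. if nb = 0 then 1 $ n $ i else 0)"
    by (rule sum.cong) (auto simp: power_0_left)
  then show "bexp 0 $ n $ i = 1 $ n $ i" by (simp add: bexp_def)
qed

lemma bexp_sum:
  assumes "\<And>x. x \<in> S \<Longrightarrow> tord 1 (f x)"
  shows "bexp (sum f S) = (\<Prod>x\<in>S. bexp (f x))"
  using assms
proof (induction S rule: infinite_finite_induct)
  case (insert x S)
  then show ?case by (simp add: bexp_add tord_sum)
qed auto

lemma bexp_uminus: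
  assumes "tord 1 F" shows "bexp (- F) * bexp F = 1"
  using bexp_add[OF tord_uminus[OF assms] assms] by simp

lemma bexp_const:
  assumes "\<theta> $ 0 = 0"
  shows "bexp (fps_const \<theta>) = fps_const (fps_exp 1 oo \<theta>)"
proof (rule fps_ext, rule fps_ext)
  fix j i
  show "bexp (fps_const \<theta>) $ j $ i = fps_const (fps_exp 1 oo \<theta>) $ j $ i"
  proof (cases "j = 0")
    case True
    then show ?thesis
      by (simp add: bexp_def fps_compose_nth atMost_atLeast0)
  next
    case False
    then show ?thesis by (simp add: bexp_def)
  qed
qed

lemma exp_log1:
  assumes "F $ 0 = 1"
  shows "fps_exp 1 oo fps_log1 F = (F :: complex fps)"
proof -
  let ?E = "fps_exp (1::complex) - 1"
  have G0: "(F - 1) $ 0 = 0" using assms by simp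
  have L0: "fps_inv ?E $ 0 = 0" by (simp add: fps_inv_def)
  have ln: "fps_ln (1::complex) = fps_inv ?E" by (rule fps_ln_fps_exp_inv) simp
  have "?E oo fps_log1 F = ?E oo (fps_inv ?E oo (F - 1))"
    by (simp add: fps_log1_def ln)
  also have "\<dots> = (?E oo fps_inv ?E) oo (F - 1)"
    by (rule fps_compose_assoc[OF G0 L0])
  also have "\<dots> = F - 1"
    using fps_inv_fps_exp_compose(2)[of "1::complex"] G0 by simp
  finally have "?E oo fps_log1 F = F - 1" .
  moreover have "?E oo fps_log1 F = (fps_exp 1 oo fps_log1 F) - 1"
    by (simp add: fps_compose_sub_distrib)
  ultimately show ?thesis by simp
qed

section \<open>qshift\<close>

lemma nth_deriv_nth: "fps_nth_deriv l g $ i = pochhammer (of_nat (i + 1)) l * g $ (i + l)"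
proof (induction l arbitrary: g)
  case (Suc l)
  show ?case
    by (simp add: Suc pochhammer_rec' algebra_simps)
qed simp

lemma nth_deriv_nth_deriv: "fps_nth_deriv l (fps_nth_deriv k g) = fps_nth_deriv (l + k) g"
  by (induction k arbitrary: g) simp_all

lemma qshift_nth: "qshift m G $ n = (\<Sum>l\<le>n. fps_const (of_int m ^ l / fact l) * fps_nth_deriv l (G $ (n - l)))"
  by (simp add: qshift_def)

lemma qshift_nth_nth: "qshift m G $ n $ i =
   (\<Sum>l\<le>n. of_int m ^ l / fact l * pochhammer (of_nat (i + 1)) l * G $ (n - l) $ (i + l))"
  by (simp add: qshift_def fps_sum_nth nth_deriv_nth mult.assoc)

lemma qshift_add: "qshift m (F + G) = qshift m F + qshift m G"
  by (rule fps_ext) (simp add: qshift_nth sum.distrib algebra_simps)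

lemma qshift_sc_mult: "qshift m (sc c * G) = sc c * qshift m G"
  by (rule fps_ext) (simp add: qshift_nth sum_distrib_left algebra_simps)

lemma qshift_const: "qshift m (fps_const g) $ n = fps_const (of_int m ^ n / fact n) * fps_nth_deriv n g"
proof -
  have "qshift m (fps_const g) $ n = (\<Sum>l\<in>{n}. fps_const (of_int m ^ l / fact l) * fps_nth_deriv l (fps_const g $ (n - l)))"
    unfolding qshift_nth by (rule sum.mono_neutral_right) auto
  then show ?thesis by simp
qed

lemma qshift_sc: "qshift m (sc c) = sc c"
  by (rule fps_ext) (simp add: qshift_const)

lemma qshift_tord: "tord d G \<Longrightarrow> tord d (qshift m G)"
  unfolding tord_def qshift_nth_nth
  by (auto intro!: sum.neutral)

lemma qshift_0: "qshift m G $ 0 = G $ 0"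
  by (simp add: qshift_nth)

definition Dx :: "bps \<Rightarrow> bps" where "Dx G = Abs_fps (\<lambda>n. fps_deriv (G $ n))"

lemma Dx_nth [simp]: "Dx G $ n = fps_deriv (G $ n)" by (simp add: Dx_def)

lemma Dx_mult: "Dx (F * G) = Dx F * G + F * Dx G"
  by (rule fps_ext) (simp add: fps_mult_nth fps_deriv_sum sum.distrib)

lemma qshift_deriv: "fps_deriv (qshift m G) = qshift m (fps_deriv G + sc (of_int m) * Dx G)"
proof (rule fps_ext)
  fix n
  define c where "c l = fps_const (of_int m ^ l / fact l :: complex)" for l
  have cS: "of_nat (Suc l) * c (Suc l) = fps_const (of_int m) * c l" for l
    by (simp add: c_def fps_of_nat[symmetric] field_simps del: of_nat_Suc)
  have "fps_deriv (qshift m G) $ n = of_nat (Suc n) * (\<Sum>l\<le>Suc n. c l * fps_nth_deriv l (G $ (Suc n - l)))"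
    by (simp add: qshift_nth c_def)
  also have "\<dots> = (\<Sum>l\<le>Suc n. of_nat (Suc n - l) * (c l * fps_nth_deriv l (G $ (Suc n - l))))
                 + (\<Sum>l\<le>Suc n. of_nat l * (c l * fps_nth_deriv l (G $ (Suc n - l))))"
    by (simp add: sum_distrib_left sum.distrib[symmetric] of_nat_diff ring_distribs)
  also have "(\<Sum>l\<le>Suc n. of_nat (Suc n - l) * (c l * fps_nth_deriv l (G $ (Suc n - l))))
      = (\<Sum>l\<le>n. c l * fps_nth_deriv l (of_nat (Suc n - l) * G $ (Suc n - l)))"
    by (simp add: fps_of_nat[symmetric] algebra_simps del: of_nat_Suc)
  also have "(\<Sum>l\<le>Suc n. of_nat l * (c l * fps_nth_deriv l (G $ (Suc n - l))))
      = (\<Sum>l\<le>n. fps_const (of_int m) * (c l * fps_nth_deriv l (fps_deriv (G $ (n - l)))))"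
    by (subst sum.atMost_Suc_shift) (simp add: cS mult.assoc[symmetric] del: of_nat_Suc)
  also have "(\<Sum>l\<le>n. c l * fps_nth_deriv l (of_nat (Suc n - l) * G $ (Suc n - l)))
      + (\<Sum>l\<le>n. fps_const (of_int m) * (c l * fps_nth_deriv l (fps_deriv (G $ (n - l)))))
      = qshift m (fps_deriv G + sc (of_int m) * Dx G) $ n"
    by (simp add: qshift_nth c_def sum.distrib[symmetric] algebra_simps Suc_diff_le del: of_nat_Suc)
  finally show "fps_deriv (qshift m G) $ n = qshift m (fps_deriv G + sc (of_int m) * Dx G) $ n" .
qed

lemma qshift_uminus: "qshift m (- G) = - qshift m G"
  using qshift_add[of m G "-G"] qshift_sc[of m 0] by (simp add: eq_neg_iff_add_eq_0 add.commute)

lemma qshift_mult_nth: "qshift m (F * G) $ n = (qshift m F * qshift m G) $ n"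
proof (induction n arbitrary: F G)
  case 0
  then show ?case by (simp add: qshift_0)
next
  case (Suc n)
  let ?q = "qshift m"
  let ?c = "sc (of_int m)"
  have "of_nat (Suc n) * ?q (F * G) $ Suc n = fps_deriv (?q (F * G)) $ n"
    by simp
  also have "\<dots> = ?q (fps_deriv F * G + F * fps_deriv G + ?c * (Dx F * G) + ?c * (F * Dx G)) $ n"
    by (simp add: qshift_deriv Dx_mult algebra_simps)
  also have "\<dots> = ?q (fps_deriv F * G) $ n + ?q (F * fps_deriv G) $ n + (?c * ?q (Dx F * G)) $ n + (?c * ?q (F * Dx G)) $ n"
    by (simp add: qshift_add qshift_sc_mult)
  also have "\<dots> = (?q (fps_deriv F) * ?q G) $ n + (?q F * ?q (fps_deriv G)) $ n
       + (?c * (?q (Dx F) * ?q G)) $ n + (?c * (?q F * ?q (Dx G))) $ n"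
    by (simp add: Suc)
  also have "\<dots> = fps_deriv (?q F * ?q G) $ n"
    apply (simp only: fps_deriv_mult qshift_deriv qshift_add qshift_sc_mult distrib_left distrib_right)
    apply (simp add: algebra_simps)
    done
  also have "\<dots> = of_nat (Suc n) * (?q F * ?q G) $ Suc n"
    unfolding fps_deriv_nth by simp
  finally show ?case
    by (metis mult_cancel_left of_nat_eq_0_iff nat.distinct(1) fps_of_nat)
qed

lemma qshift_mult: "qshift m (F * G) = qshift m F * qshift m G"
  by (rule fps_ext) (rule qshift_mult_nth)

lemma ghom_qshift: "ghom (qshift m)"
  by (simp add: ghom_def qshift_add qshift_mult qshift_sc qshift_tord)

lemma fps_const_sum: "fps_const (sum f S) = (\<Sum>x\<in>S. fps_const (f x :: 'a::comm_monoid_add))"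
  by (induction S rule: infinite_finite_induct) (auto simp flip: fps_const_add)

lemma fps_const_prod: "fps_const (prod f S) = (\<Prod>x\<in>S. fps_const (f x :: 'a::comm_ring_1))"
  by (induction S rule: infinite_finite_induct) (auto simp flip: fps_const_mult)

lemma qshift_qshift_const:
  "qshift s (qshift t (fps_const g)) = qshift (s + t) (fps_const g)"
proof (rule fps_ext)
  fix n
  have "qshift s (qshift t (fps_const g)) $ n
      = (\<Sum>l\<le>n. fps_const (of_int s ^ l / fact l * (of_int t ^ (n - l) / fact (n - l))) * fps_nth_deriv n g)"
    unfolding qshift_nth[of s] qshift_const by (simp add: nth_deriv_nth_deriv mult.assoc[symmetric])
  also have "\<dots> = fps_const (\<Sum>l\<le>n. of_int s ^ l / fact l * (of_int t ^ (n - l) / fact (n - l))) * fps_nth_deriv n g"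
    by (simp add: sum_distrib_right fps_const_sum)
  also have "(\<Sum>l\<le>n. of_int s ^ l / fact l * (of_int t ^ (n - l) / fact (n - l)) :: complex)
      = (of_int s + of_int t) ^ n / fact n"
  proof -
    have "(of_int s + of_int t) ^ n / fact n = (\<Sum>l\<le>n. of_nat (n choose l) * of_int s ^ l * (of_int t :: complex) ^ (n - l) / fact n)"
      by (simp add: binomial_ring sum_divide_distrib)
    also have "\<dots> = (\<Sum>l\<le>n. of_int s ^ l / fact l * (of_int t ^ (n - l) / fact (n - l)))"
      by (rule sum.cong) (auto simp: binomial_fact field_simps)
    finally show ?thesis by simp
  qed
  finally show "qshift s (qshift t (fps_const g)) $ n = qshift (s + t) (fps_const g) $ n"
    by (simp add: qshift_const)
qed

lemma qshift_exp: "qshift t (fps_const (fps_exp c)) = biexp c (c * of_int t)"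
proof (rule fps_ext)
  fix n
  have "of_int t ^ n / fact n * c ^ n = (c * of_int t) ^ n / (fact n :: complex)"
    by (simp add: power_mult_distrib)
  then show "qshift t (fps_const (fps_exp c)) $ n = biexp c (c * of_int t) $ n"
    by (simp add: qshift_const biexp_def mult.assoc[symmetric])
qed

lemma qshift_X: "qshift t (fps_const fps_X) = fps_const fps_X + sc (of_int t) * fps_X"
proof (rule fps_ext)
  fix n show "qshift t (fps_const fps_X) $ n = (fps_const fps_X + sc (of_int t) * fps_X) $ n"
    by (cases n) (auto simp: qshift_const)
qed

lemma biexp_mult: "biexp c d * biexp c' d' = biexp (c + c') (d + d')"
proof (rule fps_ext)
  fix n
  have "(biexp c d * biexp c' d') $ n = (\<Sum>k=0..n. fps_const (d ^ k / fact k * (d' ^ (n - k) / fact (n - k)))) * fps_exp (c + c')"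
    by (simp add: fps_mult_nth biexp_def fps_exp_add_mult sum_distrib_right sum_distrib_left mult_ac)
  also have "(\<Sum>k=0..n. fps_const (d ^ k / fact k * (d' ^ (n - k) / fact (n - k)))) = fps_const ((d + d') ^ n / fact n)"
  proof -
    have "(d + d') ^ n / fact n = (\<Sum>l\<le>n. of_nat (n choose l) * d ^ l * d' ^ (n - l) / fact n)"
      by (simp add: binomial_ring sum_divide_distrib)
    also have "\<dots> = (\<Sum>l\<le>n. d ^ l / fact l * (d' ^ (n - l) / fact (n - l)))"
      by (rule sum.cong) (auto simp: binomial_fact field_simps)
    finally show ?thesis by (simp add: fps_const_sum atMost_atLeast0)
  qed
  finally show "(biexp c d * biexp c' d') $ n = biexp (c + c') (d + d') $ n"
    by (simp add: biexp_def)
qed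

lemma biexp_00: "biexp 0 0 = 1"
  by (rule fps_ext) (simp add: biexp_def)

section \<open>negx\<close>

lemma negx_nth_nth [simp]: "negx F $ j $ i = (-1) ^ i * F $ j $ i"
  by (simp add: negx_def)

lemma negx_mult: "negx (F * G) = negx F * negx G"
proof (rule fps_ext, rule fps_ext)
  fix j i
  have key: "(-1::complex) ^ i = (-1) ^ l * (-1) ^ (i - l)" if "l \<in> {0..i}" for l
    using that by (simp add: power_add[symmetric])
  have "negx (F * G) $ j $ i = (\<Sum>k=0..j. \<Sum>l=0..i. (-1) ^ i * (F $ k $ l * G $ (j - k) $ (i - l)))"
    by (simp add: bps_mult_nth sum_distrib_left)
  also have "\<dots> = (\<Sum>k=0..j. \<Sum>l=0..i. (-1) ^ l * F $ k $ l * ((-1) ^ (i - l) * G $ (j - k) $ (i - l)))"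
    by (intro sum.cong refl) (simp add: key)
  also have "\<dots> = (negx F * negx G) $ j $ i"
    by (simp add: bps_mult_nth)
  finally show "negx (F * G) $ j $ i = (negx F * negx G) $ j $ i" .
qed

lemma ghom_negx: "ghom negx"
  unfolding ghom_def
proof (intro conjI allI impI)
  show "negx (F + G) = negx F + negx G" for F G
    by (rule fps_ext, rule fps_ext) (simp add: algebra_simps)
  show "negx (sc c) = sc c" for c
    by (rule fps_ext, rule fps_ext) simp
  show "tord d (negx F)" if "tord d F" for d F
    using that by (simp add: tord_def)
qed (rule negx_mult)

lemma negx_qshift: "negx (qshift m G) = qshift (- m) (negx G)"
proof (rule fps_ext, rule fps_ext)
  fix n i
  have key: "(-1::complex) ^ i * of_int m ^ l = of_int (- m) ^ l * (-1) ^ (i + l)" for l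
  proof -
    have sq: "(-1::complex) ^ l * (-1) ^ l = 1"
      by (simp flip: power_add)
    have "of_int (- m) ^ l * (-1) ^ (i + l) = (-1::complex) ^ i * of_int m ^ l * ((-1) ^ l * (-1) ^ l)"
      by (simp only: of_int_minus power_minus[of "of_int m"] power_add) (simp add: mult_ac)
    then show ?thesis by (simp only: sq) simp
  qed
  have "negx (qshift m G) $ n $ i = (\<Sum>l\<le>n. ((-1) ^ i * of_int m ^ l) / fact l * pochhammer (of_nat (i + 1)) l * G $ (n - l) $ (i + l))"
    by (simp add: qshift_nth_nth sum_distrib_left mult_ac)
  also have "\<dots> = (\<Sum>l\<le>n. (of_int (- m) ^ l * (-1) ^ (i + l)) / fact l * pochhammer (of_nat (i + 1)) l * G $ (n - l) $ (i + l))"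
    by (simp only: key)
  also have "\<dots> = qshift (- m) (negx G) $ n $ i"
    by (simp only: qshift_nth_nth negx_nth_nth) (simp add: mult_ac)
  finally show "negx (qshift m G) $ n $ i = qshift (- m) (negx G) $ n $ i" .
qed

lemma negx_biexp: "negx (biexp c d) = biexp (- c) d"
proof (rule fps_ext, rule fps_ext)
  fix j i
  have "(-1::complex) ^ i * c ^ i = (- c) ^ i" by (simp only: power_minus[of c])
  then show "negx (biexp c d) $ j $ i = biexp (- c) d $ j $ i"
    by (simp add: biexp_def)
qed

lemma negx_X: "negx (fps_const fps_X) = - fps_const fps_X"
  by (rule fps_ext, rule fps_ext) auto

lemma negx_hX: "negx fps_X = fps_X"
  by (rule fps_ext, rule fps_ext) auto

lemma negx_const: "negx (fps_const g) = fps_const (Abs_fps (\<lambda>i. (-1) ^ i * g $ i))"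
  by (rule fps_ext, rule fps_ext) auto

lemma biexp_mult': "c + c' = c'' \<Longrightarrow> d + d' = d'' \<Longrightarrow> biexp c d * biexp c' d' = biexp c'' d''"
  using biexp_mult by blast

definition SS :: "complex \<Rightarrow> complex \<Rightarrow> bps" where
  "SS z t = sc z * biexp (1/2) ((1/2) * t) - biexp (-1/2) ((-1/2) * t)"

definition Gn :: "complex \<Rightarrow> complex \<Rightarrow> complex \<Rightarrow> bps" where
  "Gn w s b = biexp 0 b - sc w * biexp s 0"

definition Gd :: "complex \<Rightarrow> complex \<Rightarrow> complex \<Rightarrow> bps" where
  "Gd w s b = 1 - sc w * biexp s b"

lemma sc_mult: "sc a * sc b = sc (a * b)" by simp

lemma SS_identity:
  assumes zw: "z * w = 1"
  shows "SS z (- b) * Gn w (-1) b = SS z b * Gd w (-1) b"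
proof -
  let ?B = biexp
  have p1: "?B (1/2) ((1/2) * (-b)) * ?B 0 b = ?B (1/2) ((1/2) * b)" by (rule biexp_mult') auto
  have p2: "?B (1/2) ((1/2) * (-b)) * ?B (-1) 0 = ?B (-1/2) ((-1/2) * b)" by (rule biexp_mult') auto
  have p3: "?B (-1/2) ((-1/2) * (-b)) * ?B 0 b = ?B (-1/2) ((3/2) * b)" by (rule biexp_mult') auto
  have p4: "?B (-1/2) ((-1/2) * (-b)) * ?B (-1) 0 = ?B (-3/2) ((1/2) * b)" by (rule biexp_mult') auto
  have p5: "?B (1/2) ((1/2) * b) * ?B (-1) b = ?B (-1/2) ((3/2) * b)" by (rule biexp_mult') auto
  have p6: "?B (-1/2) ((-1/2) * b) * ?B (-1) b = ?B (-3/2) ((1/2) * b)" by (rule biexp_mult') auto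
  have zw': "sc z * sc w = 1" using zw by simp
  have "SS z (- b) * Gn w (-1) b =
     sc z * (?B (1/2) ((1/2) * (-b)) * ?B 0 b) - (sc z * sc w) * (?B (1/2) ((1/2) * (-b)) * ?B (-1) 0)
     - (?B (-1/2) ((-1/2) * (-b)) * ?B 0 b) + sc w * (?B (-1/2) ((-1/2) * (-b)) * ?B (-1) 0)"
    unfolding SS_def Gn_def by (simp add: algebra_simps)
  also have "\<dots> = sc z * ?B (1/2) ((1/2) * b) - ?B (-1/2) ((-1/2) * b) - ?B (-1/2) ((3/2) * b) + sc w * ?B (-3/2) ((1/2) * b)"
    by (simp only: p1 p2 p3 p4 zw') simp
  also have "\<dots> = sc z * ?B (1/2) ((1/2) * b) - (sc z * sc w) * (?B (1/2) ((1/2) * b) * ?B (-1) b)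
     - ?B (-1/2) ((-1/2) * b) + sc w * (?B (-1/2) ((-1/2) * b) * ?B (-1) b)"
    by (simp only: p5 p6 zw') simp
  also have "\<dots> = SS z b * Gd w (-1) b"
    unfolding SS_def Gd_def by (simp add: algebra_simps)
  finally show ?thesis .
qed

lemma G_identity:
  assumes zw: "z * w = 1"
  shows "Gn w (-1) b * Gn z 1 b = Gd w (-1) b * Gd z 1 b"
proof -
  let ?B = biexp
  have p1: "?B 0 b * ?B 0 b = ?B 0 (2 * b)" by (rule biexp_mult') auto
  have p2: "?B 0 b * ?B 1 0 = ?B 1 b" by (rule biexp_mult') auto
  have p3: "?B (-1) 0 * ?B 0 b = ?B (-1) b" by (rule biexp_mult') auto
  have p4: "?B (-1) 0 * ?B 1 0 = 1" using biexp_mult'[of "-1" 1 0 0 0 0] biexp_00 by simp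
  have p5: "?B (-1) b * ?B 1 b = ?B 0 (2 * b)" by (rule biexp_mult') auto
  have zw': "sc z * sc w = 1" using zw by simp
  have "Gn w (-1) b * Gn z 1 b = ?B 0 b * ?B 0 b - sc z * (?B 0 b * ?B 1 0) - sc w * (?B (-1) 0 * ?B 0 b)
      + (sc z * sc w) * (?B (-1) 0 * ?B 1 0)"
    unfolding Gn_def by (simp add: algebra_simps)
  also have "\<dots> = ?B 0 (2 * b) - sc z * ?B 1 b - sc w * ?B (-1) b + 1"
    by (simp only: p1 p2 p3 p4 zw') simp
  also have "\<dots> = 1 - sc z * ?B 1 b - sc w * ?B (-1) b + (sc z * sc w) * (?B (-1) b * ?B 1 b)"
    by (simp only: p5 zw') simp
  also have "\<dots> = Gd w (-1) b * Gd z 1 b"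
    unfolding Gd_def by (simp add: algebra_simps)
  finally show ?thesis .
qed

definition ff :: "nat \<Rightarrow> nat \<Rightarrow> complex fps" where
  "ff N k = (if k = 0
     then (fps_exp (1/2) - fps_exp (-1/2)) / fps_X
     else fps_const (1 / (xi N ^ k - 1)) * (fps_const (xi N ^ k) * fps_exp (1/2) - fps_exp (-1/2)))"

lemma theta_ff: "theta N k = fps_log1 (ff N k)"
  by (simp add: theta_def ff_def)

lemma ff_0: "k = 0 \<or> xi N ^ k \<noteq> 1 \<Longrightarrow> ff N k $ 0 = 1"
  by (auto simp: ff_def field_simps)

lemma theta_0: "theta N k $ 0 = 0"
  by (simp add: theta_def fps_log1_def)

definition PP :: "nat \<Rightarrow> nat \<Rightarrow> int \<Rightarrow> bps" where
  "PP N k t = qshift t (fps_const (ff N k))"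

definition QQ :: "bool \<Rightarrow> complex \<Rightarrow> complex \<Rightarrow> bps" where
  "QQ b z t = (if b then fps_const fps_X + sc t * fps_X else sc (z - 1))"

lemma ff0_X: "ff N 0 * fps_X = fps_exp (1/2) - fps_exp (-1/2)"
  by (rule fps_ext) (simp add: ff_def)

lemma PQ:
  assumes "k = 0 \<or> xi N ^ k \<noteq> 1"
  shows "PP N k t * QQ (k = 0) (xi N ^ k) (of_int t) = SS (xi N ^ k) (of_int t)"
proof (cases "k = 0")
  case True
  have e: "fps_const (ff N 0 * fps_X) = fps_const (ff N 0) * fps_const fps_X" by simp
  have "PP N k t * QQ (k = 0) (xi N ^ k) (of_int t) = qshift t (fps_const (ff N 0 * fps_X))"
    unfolding e qshift_mult using True by (simp add: PP_def QQ_def qshift_X)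
  also have "\<dots> = SS (xi N ^ k) (of_int t)"
  proof -
    have e2: "fps_const (fps_exp (1/2) - fps_exp (-1/2)) = fps_const (fps_exp (1/2)) - fps_const (fps_exp (-1/2 :: complex))"
      by simp
    show ?thesis using True
      by (simp only: ff0_X e2 ghom_diff[OF ghom_qshift] qshift_exp) (simp add: SS_def)
  qed
  finally show ?thesis .
next
  case False
  then have z: "xi N ^ k \<noteq> 1" using assms by auto
  have e: "fps_const (ff N k) = sc (1 / (xi N ^ k - 1)) * (sc (xi N ^ k) * fps_const (fps_exp (1/2)) - fps_const (fps_exp (-1/2)))"
    using False by (simp add: ff_def)
  have "PP N k t = sc (1 / (xi N ^ k - 1)) * SS (xi N ^ k) (of_int t)"
    by (simp only: PP_def e qshift_mult qshift_sc ghom_diff[OF ghom_qshift] qshift_exp) (simp add: SS_def)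
  then have "PP N k t * QQ (k = 0) (xi N ^ k) (of_int t) = sc ((xi N ^ k - 1) / (xi N ^ k - 1)) * SS (xi N ^ k) (of_int t)"
    using False by (simp add: QQ_def mult_ac)
  then show ?thesis using z by simp
qed

lemma QQ_nonzero: "(\<not> b \<longrightarrow> z \<noteq> 1) \<Longrightarrow> QQ b z t \<noteq> 0"
proof
  assume h: "\<not> b \<longrightarrow> z \<noteq> 1" and q: "QQ b z t = 0"
  show False
  proof (cases b)
    case True
    then have "QQ b z t $ 0 $ 1 = 1" by (simp add: QQ_def)
    then show False using q by simp
  next
    case False
    then show False using h q by (simp add: QQ_def)
  qed
qed

lemma ring_aux1: "(a::'a::comm_ring_1) * b = 1 \<Longrightarrow> a * X - Y = - a * (b * Y - X)"
  by (simp add: algebra_simps)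

lemma negx_SS: "z * z' = 1 \<Longrightarrow> negx (SS z t) = - sc z * SS z' (- t)"
proof -
  assume zz: "z * z' = 1"
  have zz': "sc z * sc z' = 1" using zz by simp
  have "negx (SS z t) = sc z * biexp (-1/2) ((1/2) * t) - biexp (1/2) ((-1/2) * t)"
    by (simp add: SS_def ghom_diff[OF ghom_negx] ghom_mult[OF ghom_negx] ghom_sc[OF ghom_negx] negx_biexp)
  also have "\<dots> = - sc z * (sc z' * biexp (1/2) ((-1/2) * t) - biexp (-1/2) ((1/2) * t))"
    by (rule ring_aux1[OF zz'])
  also have "\<dots> = - sc z * SS z' (- t)"
    unfolding SS_def by simp
  finally show ?thesis .
qed

lemma negx_QQ: "z * z' = 1 \<Longrightarrow> (b \<longrightarrow> z = 1) \<Longrightarrow> negx (QQ b z t) = - sc z * QQ b z' (- t)"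
proof -
  assume zz: "z * z' = 1" and b: "b \<longrightarrow> z = 1"
  show ?thesis
  proof (cases b)
    case True
    then have "z = 1" "z' = 1" using b zz by auto
    then show ?thesis using True
      by (simp add: QQ_def ghom_add[OF ghom_negx] ghom_mult[OF ghom_negx] ghom_sc[OF ghom_negx] negx_X negx_hX)
  next
    case False
    have e: "z - 1 = - (z * (z' - 1))" using zz by (simp add: algebra_simps)
    have "negx (QQ b z t) = sc (z - 1)" using False by (simp add: QQ_def ghom_sc[OF ghom_negx])
    also have "\<dots> = sc (- (z * (z' - 1)))" by (simp only: e)
    also have "\<dots> = - sc z * QQ b z' (- t)" using False by (simp add: QQ_def)
    finally show ?thesis .
  qed
qed

lemma negx_PP:
  assumes vk: "k = 0 \<or> xi N ^ k \<noteq> 1" and vk': "k' = 0 \<or> xi N ^ k' \<noteq> 1"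
    and kk: "k = 0 \<longleftrightarrow> k' = 0" and zz: "xi N ^ k * xi N ^ k' = 1"
  shows "negx (PP N k t) = PP N k' (- t)"
proof -
  let ?z = "xi N ^ k" and ?z' = "xi N ^ k'"
  let ?Q' = "QQ (k' = 0) ?z' (of_int (- t))"
  have b: "(k = 0) \<longrightarrow> ?z = 1" by simp
  have nQ: "negx (QQ (k = 0) ?z (of_int t)) = - sc ?z * ?Q'"
    using negx_QQ[OF zz b, of "of_int t"] kk by simp
  have "negx (PP N k t) * (- sc ?z * ?Q') = negx (PP N k t * QQ (k = 0) ?z (of_int t))"
    by (simp add: ghom_mult[OF ghom_negx] nQ)
  also have "\<dots> = negx (SS ?z (of_int t))" using PQ[OF vk] by simp
  also have "\<dots> = - sc ?z * SS ?z' (of_int (- t))" using negx_SS[OF zz] by simp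
  also have "\<dots> = PP N k' (- t) * (- sc ?z * ?Q')"
    using PQ[OF vk', of "- t"] by (simp add: mult_ac)
  finally have eq: "negx (PP N k t) * (- sc ?z * ?Q') = PP N k' (- t) * (- sc ?z * ?Q')" .
  have z0: "?z \<noteq> 0" by (simp add: xi_def)
  have "?Q' \<noteq> 0" by (rule QQ_nonzero) (use vk' in auto)
  then have "- sc ?z * ?Q' \<noteq> 0" using z0 by simp
  then show ?thesis using eq by (metis mult_right_cancel)
qed

definition EE :: "nat \<Rightarrow> nat \<Rightarrow> int \<Rightarrow> bps" where
  "EE N k b = bexp (qnum_op b (qshift 1 (fps_const (theta N k))))"

lemma tord_Theta: "tord 1 (fps_const (theta N k))"
  by (auto simp: tord_def theta_0)

lemma qshift_zero: "qshift 0 G = G"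
proof (rule fps_ext)
  fix n
  have "qshift 0 G $ n = (\<Sum>l\<in>{0}. fps_const (of_int 0 ^ l / fact l) * fps_nth_deriv l (G $ (n - l)))"
    unfolding qshift_nth by (rule sum.mono_neutral_right) auto
  then show "qshift 0 G $ n = G $ n" by simp
qed

lemma bexp_shiftT:
  assumes "ff N k $ 0 = 1"
  shows "bexp (qshift e (qshift 1 (fps_const (theta N k)))) = PP N k (e + 1)"
proof -
  have "bexp (qshift e (qshift 1 (fps_const (theta N k)))) = qshift e (qshift 1 (bexp (fps_const (theta N k))))"
    using ghom_bexp[OF ghom_qshift qshift_tord[OF tord_Theta], of e 1 N k] ghom_bexp[OF ghom_qshift tord_Theta, of 1 N k]
    by simp
  also have "bexp (fps_const (theta N k)) = fps_const (ff N k)"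
    using bexp_const[OF theta_0] exp_log1[OF assms] by (simp add: theta_ff)
  finally show ?thesis by (simp add: qshift_qshift_const PP_def)
qed

lemma EE_cases:
  assumes "ff N k $ 0 = 1"
  shows "EE N k 2 = PP N k 2 * PP N k 0" "EE N k 0 = 1" "EE N k (-1) * PP N k 1 = 1"
proof -
  let ?T = "qshift 1 (fps_const (theta N k))"
  have tT: "tord 1 (qshift e ?T)" for e by (rule qshift_tord[OF qshift_tord[OF tord_Theta]])
  have "qnum_op 2 ?T = qshift 1 ?T + qshift (-1) ?T"
    by (simp add: qnum_op_def lessThan_nat_numeral)
  then show "EE N k 2 = PP N k 2 * PP N k 0"
    using bexp_add[OF tT tT, of 1 "-1"] bexp_shiftT[OF assms, of 1] bexp_shiftT[OF assms, of "-1"]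
    by (simp add: EE_def)
  show "EE N k 0 = 1" by (simp add: EE_def qnum_op_def)
  have "qnum_op (-1) ?T = - qshift 0 ?T"
    by (simp add: qnum_op_def)
  then show "EE N k (-1) * PP N k 1 = 1"
    using bexp_uminus[OF tT[of 0]] bexp_shiftT[OF assms, of 0] by (simp add: EE_def)
qed

lemma ring_aux2:
  fixes X :: "'a::comm_ring_1"
  assumes h1: "X * P' = 1" and h2: "Y * P = 1" and h3: "P * Q1 * G1 = P' * Q2 * G2"
  shows "X * G1 * Q1 = Y * G2 * Q2"
proof -
  have "X * G1 * Q1 = X * G1 * Q1 * (Y * P)" using h2 by simp
  also have "\<dots> = X * Y * (P * Q1 * G1)" by (simp add: mult_ac)
  also have "\<dots> = X * Y * (P' * Q2 * G2)" using h3 by simp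
  also have "\<dots> = Y * G2 * Q2 * (X * P')" by (simp add: mult_ac)
  finally show ?thesis using h1 by simp
qed

lemma ring_aux3:
  fixes a :: "'a::comm_ring_1"
  assumes "a * q = s" "a' * q' = s'" "s * g = s' * g'"
  shows "a * p * g * q = a' * p * g' * q'"
proof -
  have "a * p * g * q = p * (a * q) * g" by (simp add: mult_ac)
  also have "\<dots> = p * (s * g)" using assms(1) by (simp add: mult_ac)
  also have "\<dots> = p * (s' * g')" using assms(3) by simp
  also have "\<dots> = a' * p * g' * q'" by (simp add: assms(2)[symmetric] mult_ac)
  finally show ?thesis .
qed

lemma ring_aux4:
  fixes X :: "'a::comm_ring_1"
  assumes "X * P = 1" "Y * P = 1" shows "X = Y"
  by (metis assms mult.commute mult_1_right mult.assoc)

locale kpair =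
  fixes N k k' :: nat
  assumes vk: "k = 0 \<or> xi N ^ k \<noteq> 1" and vk': "k' = 0 \<or> xi N ^ k' \<noteq> 1"
    and kk: "k = 0 \<longleftrightarrow> k' = 0" and zz: "xi N ^ k * xi N ^ k' = 1"
begin

lemma negx_PP1: "negx (PP N k t) = PP N k' (- t)"
  by (rule negx_PP[OF vk vk' kk zz])

lemma negx_PP2: "negx (PP N k' t) = PP N k (- t)"
  by (rule negx_PP[OF vk' vk]) (use kk zz in \<open>auto simp: mult.commute\<close>)

lemma ff1: "ff N k $ 0 = 1" by (rule ff_0[OF vk])
lemma ff2: "ff N k' $ 0 = 1" by (rule ff_0[OF vk'])

lemma qshift_PP: "qshift s (PP N j t) = PP N j (s + t)"
  by (simp add: PP_def qshift_qshift_const)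

lemma claim3_k:
  assumes b: "b \<in> {2, 0, -1}"
  shows "qshift (-2) (EE N k' b) = negx (EE N k b)"
proof -
  consider "b = 2" | "b = 0" | "b = -1" using b by auto
  then show ?thesis
  proof cases
    case 1
    then show ?thesis
      by (simp add: EE_cases[OF ff1] EE_cases[OF ff2] ghom_mult[OF ghom_qshift] ghom_mult[OF ghom_negx]
          qshift_PP negx_PP1 mult.commute)
  next
    case 2
    then show ?thesis
      by (simp add: EE_cases[OF ff1] EE_cases[OF ff2] ghom_one[OF ghom_qshift] ghom_one[OF ghom_negx])
  next
    case 3
    have "qshift (-2) (EE N k' (-1)) * PP N k' (-1) = qshift (-2) (EE N k' (-1) * PP N k' 1)"
      by (simp add: ghom_mult[OF ghom_qshift] qshift_PP)
    then have h1: "qshift (-2) (EE N k' (-1)) * PP N k' (-1) = 1"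
      by (simp add: EE_cases[OF ff2] ghom_one[OF ghom_qshift])
    have "negx (EE N k (-1)) * PP N k' (-1) = negx (EE N k (-1) * PP N k 1)"
      by (simp add: ghom_mult[OF ghom_negx] negx_PP1)
    then have h2: "negx (EE N k (-1)) * PP N k' (-1) = 1"
      by (simp add: EE_cases[OF ff1] ghom_one[OF ghom_negx])
    show ?thesis using ring_aux4[OF h1 h2] 3 by simp
  qed
qed

lemma claim1_k:
  assumes b: "b \<in> {2, 0, -1}"
  shows "negx (EE N k' b) * Gn (xi N ^ k') (-1) (of_int b) * QQ (k = 0) (xi N ^ k) (of_int (- b))
       = EE N k b * Gd (xi N ^ k') (-1) (of_int b) * QQ (k = 0) (xi N ^ k) (of_int b)"
proof -
  let ?z = "xi N ^ k" and ?w = "xi N ^ k'"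
  have SI: "SS ?z (- c) * Gn ?w (-1) c = SS ?z c * Gd ?w (-1) c" for c
    by (rule SS_identity[OF zz])
  have PQk: "PP N k t * QQ (k = 0) ?z (of_int t) = SS ?z (of_int t)" for t
    by (rule PQ[OF vk])
  consider "b = 2" | "b = 0" | "b = -1" using b by auto
  then show ?thesis
  proof cases
    case 1
    have e: "negx (EE N k' b) = PP N k (-2) * PP N k 0"
      using 1 by (simp add: EE_cases[OF ff2] ghom_mult[OF ghom_negx] negx_PP2)
    have e2: "EE N k b = PP N k 2 * PP N k 0" using 1 by (simp add: EE_cases[OF ff1])
    have q1: "PP N k (-2) * QQ (k = 0) ?z (-2) = SS ?z (-2)" using PQk[of "-2"] by simp
    have q2: "PP N k 2 * QQ (k = 0) ?z 2 = SS ?z 2" using PQk[of 2] by simp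
    have "PP N k (-2) * PP N k 0 * Gn ?w (-1) 2 * QQ (k = 0) ?z (-2) = PP N k 2 * PP N k 0 * Gd ?w (-1) 2 * QQ (k = 0) ?z 2"
      by (rule ring_aux3[OF q1 q2 SI[of 2]])
    then show ?thesis unfolding e e2 using 1 by simp
  next
    case 2
    then show ?thesis
      by (simp add: EE_cases[OF ff1] EE_cases[OF ff2] ghom_one[OF ghom_negx] Gn_def Gd_def biexp_00)
  next
    case 3
    have h1: "negx (EE N k' (-1)) * PP N k (-1) = 1"
    proof -
      have "negx (EE N k' (-1)) * PP N k (-1) = negx (EE N k' (-1) * PP N k' 1)"
        by (simp add: ghom_mult[OF ghom_negx] negx_PP2)
      then show ?thesis by (simp add: EE_cases[OF ff2] ghom_one[OF ghom_negx])
    qed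
    have h2: "EE N k (-1) * PP N k 1 = 1" by (rule EE_cases(3)[OF ff1])
    have h3: "PP N k 1 * QQ (k = 0) ?z 1 * Gn ?w (-1) (-1) = PP N k (-1) * QQ (k = 0) ?z (-1) * Gd ?w (-1) (-1)"
      using PQk[of 1] PQk[of "-1"] SI[of "-1"] by simp
    show ?thesis using ring_aux2[OF h1 h2 h3] 3 by simp
  qed
qed

end

lemma to_Lh_nth [simp]: "to_Lh F $ n = fps_to_fls (F $ n)"
  by (simp add: to_Lh_def)

lemma fps_to_fls_sum: "fps_to_fls (sum f S) = (\<Sum>x\<in>S. fps_to_fls (f x))"
  by (induction S rule: infinite_finite_induct) auto

lemma to_Lh_add: "to_Lh (F + G) = to_Lh F + to_Lh G"
  by (rule fps_ext) simp

lemma to_Lh_diff: "to_Lh (F - G) = to_Lh F - to_Lh G"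
  by (rule fps_ext) simp

lemma to_Lh_mult: "to_Lh (F * G) = to_Lh F * to_Lh G"
  by (rule fps_ext) (simp add: fps_mult_nth fps_to_fls_sum fls_times_fps_to_fls)

lemma to_Lh_one: "to_Lh 1 = 1"
  by (rule fps_ext) simp

lemma to_Lh_prod: "to_Lh (prod f S) = (\<Prod>x\<in>S. to_Lh (f x))"
  by (induction S rule: infinite_finite_induct) (auto simp: to_Lh_one to_Lh_mult)

lemma to_Lh_sc: "to_Lh (sc c) = fps_const (fls_const c)"
  by (rule fps_ext) simp

lemma to_Lh_Xc: "to_Lh (fps_const fps_X) = fps_const fls_X"
  by (rule fps_ext) simp

lemma to_Lh_hX: "to_Lh fps_X = fps_X"
  by (rule fps_ext) simp

lemma to_Lh_QQ: "to_Lh (QQ True z (of_int b)) = fps_const fls_X + of_int b * fps_X"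
  by (simp add: QQ_def to_Lh_add to_Lh_mult to_Lh_sc to_Lh_Xc to_Lh_hX fps_of_int[symmetric] fls_of_int)

lemma to_Lh_QQ': "to_Lh (QQ True z (of_int (- b))) = fps_const fls_X - of_int b * fps_X"
  by (simp add: QQ_def to_Lh_add to_Lh_mult to_Lh_sc to_Lh_Xc to_Lh_hX fps_of_int[symmetric] fls_of_int)

lemma to_Lh_unit: "F $ 0 \<noteq> 0 \<Longrightarrow> to_Lh F $ 0 \<noteq> 0"
  by simp

lemma prod_nth_0: "(prod f S :: 'a::comm_ring_1 fps) $ 0 = (\<Prod>x\<in>S. f x $ 0)"
  by (induction S rule: infinite_finite_induct) auto

lemma exp_poly_unit:
  assumes "w \<noteq> 0" "s \<noteq> 0"
  shows "1 - fps_const w * fps_exp s \<noteq> (0 :: complex fps)"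
proof
  assume "1 - fps_const w * fps_exp s = 0"
  then have "(1 - fps_const w * fps_exp s) $ 1 = 0" by simp
  then show False using assms by simp
qed

lemma Gn_unit: "w \<noteq> 0 \<Longrightarrow> s \<noteq> 0 \<Longrightarrow> Gn w s b $ 0 \<noteq> 0"
  using exp_poly_unit[of w s] by (simp add: Gn_def biexp_def)

lemma Gd_unit: "w \<noteq> 0 \<Longrightarrow> s \<noteq> 0 \<Longrightarrow> Gd w s b $ 0 \<noteq> 0"
  using exp_poly_unit[of w s] by (simp add: Gd_def biexp_def)

lemma bexp_unit: "bexp F $ 0 $ 0 = 1"
  by (simp add: bexp_def)

lemma QQ_unit: "QQ True z t $ 0 \<noteq> 0"
  by (simp add: QQ_def)

section \<open>Permutations and roots of unity\<close>

lemma perm_order_props: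
  assumes "bij (\<mu>::'i::finite \<Rightarrow> 'i)"
  shows "0 < perm_order \<mu> \<and> \<mu> ^^ perm_order \<mu> = id"
proof -
  have "\<not> inj (\<lambda>n::nat. \<mu> ^^ n)"
  proof
    assume "inj (\<lambda>n::nat. \<mu> ^^ n)"
    moreover have "finite (range (\<lambda>n::nat. \<mu> ^^ n))" by simp
    ultimately have "finite (UNIV :: nat set)" using finite_imageD by blast
    then show False by simp
  qed
  then obtain a b :: nat where ab: "a \<noteq> b" "\<mu> ^^ a = \<mu> ^^ b" unfolding inj_def by blast
  have "\<exists>a b. a < b \<and> \<mu> ^^ a = \<mu> ^^ b"
  proof (cases "a < b")
    case True then show ?thesis using ab by blast
  next
    case False then have "b < a" using ab by simp
    then show ?thesis using ab by metis
  qed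
  then obtain a b where ab2: "a < b" "\<mu> ^^ a = \<mu> ^^ b" by blast
  have inj: "inj (\<mu> ^^ a)" using assms by (simp add: bij_is_inj)
  have "\<mu> ^^ a \<circ> \<mu> ^^ (b - a) = \<mu> ^^ (a + (b - a))" by (simp only: funpow_add)
  also have "a + (b - a) = b" using ab2 by simp
  finally have c0: "\<mu> ^^ a \<circ> \<mu> ^^ (b - a) = \<mu> ^^ b" .
  from c0 have c: "\<mu> ^^ a \<circ> \<mu> ^^ (b - a) = \<mu> ^^ a" unfolding ab2(2)[symmetric] .
  have "\<mu> ^^ (b - a) = id"
  proof
    fix x
    have "(\<mu> ^^ a) ((\<mu> ^^ (b - a)) x) = (\<mu> ^^ a) x" using c by (metis comp_apply)
    then show "(\<mu> ^^ (b - a)) x = id x" using inj by (simp add: inj_eq)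
  qed
  then have ex: "0 < b - a \<and> \<mu> ^^ (b - a) = id" using ab2 by simp
  show ?thesis unfolding perm_order_def by (rule LeastI[of _ "b - a"]) (rule ex)
qed

lemma A_funpow:
  assumes "\<forall>a b. A (\<mu> a) (\<mu> b) = A a b"
  shows "A ((\<mu> ^^ n) a) ((\<mu> ^^ n) b) = A a b"
  by (induction n) (simp_all add: assms)

lemma xi_nonzero: "xi N \<noteq> 0" by (simp add: xi_def)

lemma xi_pow: "xi N ^ k = exp (of_nat k * (2 * of_real pi * \<i> / of_nat N))"
  by (simp only: xi_def exp_of_nat_mult)

lemma xi_pow_N: "0 < N \<Longrightarrow> xi N ^ N = 1"
proof -
  assume "0 < N"
  then have "of_nat N * (2 * of_real pi * \<i> / of_nat N) = 2 * of_real pi * (\<i>::complex)" by simp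
  then show ?thesis by (simp add: xi_pow)
qed

lemma xi_pow_ne1:
  assumes "0 < k" "k < N"
  shows "xi N ^ k \<noteq> 1"
proof
  assume "xi N ^ k = 1"
  then obtain n :: int where n: "Im (of_nat k * (2 * of_real pi * \<i> / of_nat N)) = of_int (2 * n) * pi"
    unfolding xi_pow exp_eq_1 by blast
  have "Im (of_nat k * (2 * of_real pi * \<i> / of_nat N)) = real k * 2 * pi / real N"
    by (simp add: Im_divide_of_nat)
  with n have "real k * 2 * pi / real N = real_of_int (2 * n) * pi" by simp
  then have "real k / real N = real_of_int n" using assms by (simp add: field_simps)
  then have "real k = real_of_int n * real N" using assms by (simp add: field_simps)
  then have "int k = n * int N" by (metis of_int_eq_iff of_int_mult of_int_of_nat_eq)
  moreover have "1 \<le> n"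
  proof (rule ccontr)
    assume "\<not> 1 \<le> n"
    then have "n \<le> 0" by simp
    then have "n * int N \<le> 0" by (simp add: mult_nonpos_nonneg)
    then show False using \<open>int k = n * int N\<close> assms by simp
  qed
  ultimately have "int N \<le> int k" using mult_right_mono[of 1 n "int N"] by simp
  then show False using assms by simp
qed

definition rr :: "nat \<Rightarrow> nat \<Rightarrow> nat" where "rr N k = (N - k) mod N"

lemma rr_facts:
  assumes "0 < N" "k < N"
  shows "rr N k < N" "rr N (rr N k) = k" "rr N k = 0 \<longleftrightarrow> k = 0"
    "k + rr N k = N \<or> (k = 0 \<and> rr N k = 0)"
  using assms by (auto simp: rr_def mod_if)

lemma kpair_rr:
  assumes "0 < N" "k < N"
  shows "kpair N k (rr N k)"
proof
  show "k = 0 \<or> xi N ^ k \<noteq> 1" using xi_pow_ne1[of k N] assms by auto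
  show "rr N k = 0 \<or> xi N ^ rr N k \<noteq> 1" using xi_pow_ne1[of "rr N k" N] rr_facts[OF assms] by auto
  show "k = 0 \<longleftrightarrow> rr N k = 0" using rr_facts[OF assms] by auto
  show "xi N ^ k * xi N ^ rr N k = 1"
    using rr_facts(4)[OF assms] xi_pow_N[OF assms(1)] by (auto simp flip: power_add)
qed

lemma inv_xi_rr:
  assumes "0 < N" "k < N"
  shows "inverse (xi N) ^ k = xi N ^ rr N k"
proof -
  have "xi N ^ k * xi N ^ rr N k = 1" using kpair.zz[OF kpair_rr[OF assms]] .
  then have "inverse (xi N ^ k) = xi N ^ rr N k" by (rule inverse_unique)
  then show ?thesis by (simp add: power_inverse)
qed

lemma A_rr:
  assumes sym: "\<forall>a b. A a b = A b a" and inv: "\<forall>a b. A (\<mu> a) (\<mu> b) = A a b"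
    and id: "\<mu> ^^ N = id" and "0 < N" "k < N"
  shows "A ((\<mu> ^^ rr N k) i) j = A ((\<mu> ^^ k) j) i"
proof -
  have e0: "(\<mu> ^^ rr N k) ((\<mu> ^^ k) j) = (\<mu> ^^ (rr N k + k)) j"
    by (simp add: funpow_add)
  have e: "(\<mu> ^^ rr N k) ((\<mu> ^^ k) j) = (\<mu> ^^ (k + rr N k)) j"
    unfolding e0 by (simp add: add.commute)
  have "(\<mu> ^^ rr N k) ((\<mu> ^^ k) j) = j"
    unfolding e using rr_facts(4)[OF assms(4,5)] id by auto
  then have "A ((\<mu> ^^ k) j) i = A j ((\<mu> ^^ rr N k) i)"
    using A_funpow[OF inv, of "rr N k" "(\<mu> ^^ k) j" i] by simp
  then show ?thesis using sym by simp
qed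


lemma qnum_tord: "tord 1 G \<Longrightarrow> tord 1 (qnum_op n G)"
  by (auto simp: qnum_op_def intro!: tord_sum tord_uminus qshift_tord)

lemma kappa_prod:
  "kappa A \<mu> i j = (\<Prod>k<perm_order \<mu>. EE (perm_order \<mu>) k (A ((\<mu> ^^ k) i) j))"
  unfolding kappa_def Let_def EE_def
  by (rule bexp_sum) (intro qnum_tord qshift_tord tord_Theta)

lemma cartan_entries:
  assumes "cartan_ADE A" shows "A a b \<in> {2, 0, -1}"
  using assms unfolding cartan_ADE_def by (cases "a = b") auto

lemma prod_rr:
  assumes "0 < N"
  shows "(\<Prod>k<N. g (rr N k)) = (\<Prod>k<N. g k)"
  by (rule prod.reindex_bij_witness[of _ "rr N" "rr N"]) (use rr_facts[OF assms] in auto)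

lemma L_alg1:
  fixes Y Nn Xm K Dd Xp :: "'a::field fps"
  assumes h: "Y * Nn * Xm = K * Dd * Xp" and K: "K $ 0 \<noteq> 0" and D: "Dd $ 0 \<noteq> 0"
    and X: "Xp $ 0 \<noteq> 0" and Nn: "Nn $ 0 \<noteq> 0"
  shows "Y * inverse K * (Xm * inverse Xp) = inverse (Nn * inverse Dd)"
proof -
  have r: "inverse (Nn * inverse Dd) = inverse Nn * Dd"
    using D by (simp add: fps_inverse_mult)
  have "Y * inverse K * (Xm * inverse Xp) * Nn = (Y * Nn * Xm) * (K * inverse K) * inverse K * inverse Xp"
    using K by (simp add: inverse_mult_eq_1' mult_ac)
  also have "\<dots> = Dd * (K * inverse K) * (Xp * inverse Xp)"
    unfolding h using K by (simp add: inverse_mult_eq_1' mult_ac)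
  also have "\<dots> = inverse Nn * Dd * Nn"
    using K X Nn by (simp add: inverse_mult_eq_1 inverse_mult_eq_1' mult_ac)
  finally have "Y * inverse K * (Xm * inverse Xp) * Nn = inverse Nn * Dd * Nn" .
  moreover have "Nn \<noteq> 0" using Nn by auto
  ultimately show ?thesis unfolding r by simp
qed

lemma L_alg2:
  fixes Nn Nn2 Dd Dd2 :: "'a::field fps"
  assumes h: "Nn * Nn2 = Dd * Dd2" and N: "Nn $ 0 \<noteq> 0" and D: "Dd $ 0 \<noteq> 0" and D2: "Dd2 $ 0 \<noteq> 0"
  shows "inverse (Nn * inverse Dd) = Nn2 * inverse Dd2"
proof -
  have r: "inverse (Nn * inverse Dd) = inverse Nn * Dd"
    using D by (simp add: fps_inverse_mult)
  have "inverse Nn * Dd * (Nn * Dd2) = (inverse Nn * Nn) * (Dd * Dd2)" by (simp add: mult_ac)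
  also have "\<dots> = Nn * Nn2 * (Dd2 * inverse Dd2)" using N D2 h by (simp add: inverse_mult_eq_1 inverse_mult_eq_1')
  also have "\<dots> = Nn2 * inverse Dd2 * (Nn * Dd2)" by (simp add: mult_ac)
  finally have "inverse Nn * Dd * (Nn * Dd2) = Nn2 * inverse Dd2 * (Nn * Dd2)" .
  moreover have "Nn * Dd2 \<noteq> 0" using N D2 by auto
  ultimately show ?thesis unfolding r by simp
qed

lemma prod_unit:
  assumes "\<And>k. k \<in> S \<Longrightarrow> F k $ 0 \<noteq> 0"
  shows "(\<Prod>k\<in>S. to_Lh (F k)) $ 0 \<noteq> 0"
  using assms by (induction S rule: infinite_finite_induct) auto

theorem lemma7p1:
  fixes A :: "'i::finite \<Rightarrow> 'i \<Rightarrow> int" and \<mu> :: "'i \<Rightarrow> 'i" and i j :: 'i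
  assumes "cartan_ADE A"
    and "bij \<mu>"
    and "\<forall>a b. A (\<mu> a) (\<mu> b) = A a b"
  shows "to_Lh (negx (kappa A \<mu> i j)) * inverse (to_Lh (kappa A \<mu> j i)) * xfrac (A i j)
           = inverse (gtilde_exp A \<mu> j i (-1))
       \<and> inverse (gtilde_exp A \<mu> j i (-1)) = gtilde_exp A \<mu> i j 1
       \<and> qshift (-2) (kappa A \<mu> i j) = negx (kappa A \<mu> j i)"
proof -
  define N where "N = perm_order \<mu>"
  have N0: "0 < N" and Nid: "\<mu> ^^ N = id" using perm_order_props[OF assms(2)] by (auto simp: N_def)
  have sym: "\<forall>a b. A a b = A b a" using assms(1) by (simp add: cartan_ADE_def)
  define bb where "bb k = A ((\<mu> ^^ k) j) i" for k
  define aa where "aa k = A ((\<mu> ^^ k) i) j" for k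
  have aa_rr: "aa (rr N k) = bb k" if "k < N" for k
    unfolding aa_def bb_def by (rule A_rr[OF sym assms(3) Nid N0 that])
  have bbE: "bb k \<in> {2, 0, -1}" for k unfolding bb_def by (rule cartan_entries[OF assms(1)])
  have kp: "kpair N k (rr N k)" if "k < N" for k by (rule kpair_rr[OF N0 that])
  have kij: "kappa A \<mu> i j = (\<Prod>k<N. EE N (rr N k) (bb k))"
  proof -
    have "kappa A \<mu> i j = (\<Prod>k<N. EE N k (aa k))" by (simp add: kappa_prod N_def aa_def)
    also have "\<dots> = (\<Prod>k<N. EE N (rr N k) (aa (rr N k)))" by (rule prod_rr[OF N0, symmetric])
    also have "\<dots> = (\<Prod>k<N. EE N (rr N k) (bb k))" by (rule prod.cong) (auto simp: aa_rr)
    finally show ?thesis .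
  qed
  have kji: "kappa A \<mu> j i = (\<Prod>k<N. EE N k (bb k))" by (simp add: kappa_prod N_def bb_def)
  have c3: "qshift (-2) (kappa A \<mu> i j) = negx (kappa A \<mu> j i)"
    unfolding kij kji ghom_prod[OF ghom_qshift] ghom_prod[OF ghom_negx]
    by (rule prod.cong[OF refl]) (simp add: kpair.claim3_k[OF kp bbE])
  let ?z = "\<lambda>k. xi N ^ k" and ?w = "\<lambda>k. xi N ^ rr N k"
  let ?Gn = "\<lambda>k. Gn (?w k) (-1) (of_int (bb k))" and ?Gd = "\<lambda>k. Gd (?w k) (-1) (of_int (bb k))"
  let ?Gn2 = "\<lambda>k. Gn (?z k) 1 (of_int (bb k))" and ?Gd2 = "\<lambda>k. Gd (?z k) 1 (of_int (bb k))"
  have pk: "negx (EE N (rr N k) (bb k)) * ?Gn k * QQ (k = 0) (?z k) (of_int (- bb k))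
       = EE N k (bb k) * ?Gd k * QQ (k = 0) (?z k) (of_int (bb k))" if "k < N" for k
    by (rule kpair.claim1_k[OF kp[OF that] bbE])
  have P1: "negx (kappa A \<mu> i j) * (\<Prod>k<N. ?Gn k) * (\<Prod>k<N. QQ (k = 0) (?z k) (of_int (- bb k)))
      = kappa A \<mu> j i * (\<Prod>k<N. ?Gd k) * (\<Prod>k<N. QQ (k = 0) (?z k) (of_int (bb k)))"
    unfolding kij kji ghom_prod[OF ghom_negx] prod.distrib[symmetric]
    by (rule prod.cong[OF refl]) (use pk in simp)
  obtain M where M: "N = Suc M" using N0 by (cases N) auto
  define C where "C = (\<Prod>m<M. QQ False (?z (Suc m)) 0)"
  have QQsplit: "(\<Prod>k<N. QQ (k = 0) (?z k) (t k)) = QQ True 1 (t 0) * C" for t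
    unfolding M C_def by (subst prod.lessThan_Suc_shift) (simp add: QQ_def)
  have C0: "C \<noteq> 0"
  proof -
    have "QQ False (?z (Suc m)) 0 \<noteq> 0" if "m < M" for m
      by (rule QQ_nonzero) (use xi_pow_ne1[of "Suc m" N] that M in auto)
    then show ?thesis unfolding C_def by (simp add: prod_zero_iff)
  qed
  have P2: "negx (kappa A \<mu> i j) * (\<Prod>k<N. ?Gn k) * QQ True 1 (of_int (- bb 0))
      = kappa A \<mu> j i * (\<Prod>k<N. ?Gd k) * QQ True 1 (of_int (bb 0))"
  proof -
    have "negx (kappa A \<mu> i j) * (\<Prod>k<N. ?Gn k) * QQ True 1 (of_int (- bb 0)) * C
      = kappa A \<mu> j i * (\<Prod>k<N. ?Gd k) * QQ True 1 (of_int (bb 0)) * C"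
      using P1 unfolding QQsplit by (simp add: mult.assoc)
    then show ?thesis using C0 by simp
  qed
  have P3: "to_Lh (negx (kappa A \<mu> i j)) * (\<Prod>k<N. to_Lh (?Gn k)) * (fps_const fls_X - of_int (bb 0) * fps_X)
      = to_Lh (kappa A \<mu> j i) * (\<Prod>k<N. to_Lh (?Gd k)) * (fps_const fls_X + of_int (bb 0) * fps_X)"
    using arg_cong[OF P2, of to_Lh] by (simp only: to_Lh_mult to_Lh_prod to_Lh_QQ') (simp only: to_Lh_QQ)
  have gt1: "gtilde_exp A \<mu> j i (-1) = (\<Prod>k<N. to_Lh (?Gn k)) * inverse (\<Prod>k<N. to_Lh (?Gd k))"
  proof -
    have "gtilde_exp A \<mu> j i (-1) = (\<Prod>k<N. to_Lh (?Gn k) * inverse (to_Lh (?Gd k)))"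
      unfolding gtilde_exp_def Let_def N_def[symmetric]
      by (rule prod.cong[OF refl]) (simp add: Gn_def Gd_def bb_def inv_xi_rr[OF N0])
    then show ?thesis by (simp add: prod.distrib inverse_prod_fps)
  qed
  have gt2: "gtilde_exp A \<mu> i j 1 = (\<Prod>k<N. to_Lh (?Gn2 k)) * inverse (\<Prod>k<N. to_Lh (?Gd2 k))"
  proof -
    have "gtilde_exp A \<mu> i j 1 = (\<Prod>k<N. to_Lh (Gn (inverse (xi N) ^ k) 1 (of_int (aa k))) * inverse (to_Lh (Gd (inverse (xi N) ^ k) 1 (of_int (aa k)))))"
      unfolding gtilde_exp_def Let_def N_def[symmetric]
      by (rule prod.cong[OF refl]) (simp add: Gn_def Gd_def aa_def)
    also have "\<dots> = (\<Prod>k<N. to_Lh (Gn (inverse (xi N) ^ rr N k) 1 (of_int (aa (rr N k)))) * inverse (to_Lh (Gd (inverse (xi N) ^ rr N k) 1 (of_int (aa (rr N k))))))"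
      by (rule prod_rr[OF N0, symmetric])
    also have "\<dots> = (\<Prod>k<N. to_Lh (?Gn2 k) * inverse (to_Lh (?Gd2 k)))"
    proof (rule prod.cong[OF refl])
      fix k assume k: "k \<in> {..<N}"
      then have "inverse (xi N) ^ rr N k = xi N ^ k"
        using inv_xi_rr[OF N0 rr_facts(1)[OF N0]] rr_facts(2)[OF N0] by simp
      then show "to_Lh (Gn (inverse (xi N) ^ rr N k) 1 (of_int (aa (rr N k)))) * inverse (to_Lh (Gd (inverse (xi N) ^ rr N k) 1 (of_int (aa (rr N k)))))
          = to_Lh (?Gn2 k) * inverse (to_Lh (?Gd2 k))"
        using k aa_rr by simp
    qed
    finally show ?thesis by (simp add: prod.distrib inverse_prod_fps)
  qed
  have xf: "xfrac (A i j) = (fps_const fls_X - of_int (bb 0) * fps_X) * inverse (fps_const fls_X + of_int (bb 0) * fps_X)"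
    using sym by (simp add: xfrac_def bb_def)
  have wnz: "?w k \<noteq> 0" "?z k \<noteq> 0" for k by (simp_all add: xi_nonzero)
  have uN: "(\<Prod>k<N. to_Lh (?Gn k)) $ 0 \<noteq> 0" by (rule prod_unit) (rule Gn_unit; simp add: xi_nonzero)
  have uD: "(\<Prod>k<N. to_Lh (?Gd k)) $ 0 \<noteq> 0" by (rule prod_unit) (rule Gd_unit; simp add: xi_nonzero)
  have uD2: "(\<Prod>k<N. to_Lh (?Gd2 k)) $ 0 \<noteq> 0" by (rule prod_unit) (rule Gd_unit; simp add: xi_nonzero)
  have uK: "to_Lh (kappa A \<mu> j i) $ 0 \<noteq> 0"
  proof (rule to_Lh_unit)
    have "kappa A \<mu> j i $ 0 $ 0 = 1" unfolding kappa_def Let_def by (rule bexp_unit)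
    then show "kappa A \<mu> j i $ 0 \<noteq> 0" by auto
  qed
  have uX: "(fps_const fls_X + of_int (bb 0) * fps_X :: complex fls fps) $ 0 \<noteq> 0"
    by simp
  have c1: "to_Lh (negx (kappa A \<mu> i j)) * inverse (to_Lh (kappa A \<mu> j i)) * xfrac (A i j)
           = inverse (gtilde_exp A \<mu> j i (-1))"
    unfolding xf gt1 by (rule L_alg1[OF P3 uK uD uX uN])
  have GG: "(\<Prod>k<N. to_Lh (?Gn k)) * (\<Prod>k<N. to_Lh (?Gn2 k)) = (\<Prod>k<N. to_Lh (?Gd k)) * (\<Prod>k<N. to_Lh (?Gd2 k))"
  proof -
    have "?Gn k * ?Gn2 k = ?Gd k * ?Gd2 k" if "k < N" for k
      by (rule G_identity) (use kpair.zz[OF kp[OF that]] in simp)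
    then have "(\<Prod>k<N. ?Gn k * ?Gn2 k) = (\<Prod>k<N. ?Gd k * ?Gd2 k)" by (intro prod.cong) auto
    then have "to_Lh (\<Prod>k<N. ?Gn k * ?Gn2 k) = to_Lh (\<Prod>k<N. ?Gd k * ?Gd2 k)" by simp
    then show ?thesis by (simp add: to_Lh_prod to_Lh_mult prod.distrib)
  qed
  have c2: "inverse (gtilde_exp A \<mu> j i (-1)) = gtilde_exp A \<mu> i j 1"
    unfolding gt1 gt2 by (rule L_alg2[OF GG uN uD uD2])
  show ?thesis using c1 c2 c3 by blast
qed

end
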